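(* For every $n\ge 1$, the number $b_n$ of distinct complete lines of play of Planted Brussels Sprouts whose initial state has $n$ arms is $b_n=n^{n-2}$.
   Context: Planted Brussels Sprouts of order $n$: start with a closed disk with $n$ marked points on its boundary circle, labeled $1,\dots,n$ in clockwise order. Attached to each marked point is an arm, a short segment pointing into the interior of the disk; these arms are free. A move consists of two steps. First, choose two free arms and join their free ends by a simple curve (an arc) in the disk that does not intersect any previously drawn arc or arm; the two joined arms cease to be free. Second, mark a point (a notch) on the arc, from which two new free arms emanate, one on each side of the arc. The game ends when no move is possible. A (complete) line of play is the sequence of moves from the initial state to the end of the game. Long labels: the original arm at point $i$ has long label $i$. If an arc joins arms with long labels $\alpha$ and $\beta$, the two new arms receive long labels $(\alpha,\beta)$ and $(\beta,\alpha)$, placed so that, going clockwise around the notch, one sees the old arm $\alpha$, the new arm $(\alpha,\beta)$, the old arm $\beta$, and the new arm $(\beta,\alpha)$. Two lines of play are considered the same iff for every $k$ the two arms joined at the $k$-th move have the same long labels in both. Otherwise they are distinct. *)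

theory Defs
  imports Main
begin

text \<open>Long labels: the original arm at point i has label Base i; an arc joining
arms a and b creates new arms Pair a b and Pair b a.\<close>
datatype lbl = Base nat | Pair lbl lbl

text \<open>A state of the game: the list of regions (faces) of the disk; each region is
represented by the cyclic sequence (listed clockwise, up to rotation) of the free
arms lying in it.  Since every drawn arc is connected to the boundary circle,
every region is a topological disk, so this describes the state completely.\<close>
type_synonym state = "lbl list list"

text \<open>One move: join free arms a and b lying in the same region r.  Rotating r to
the form a # X @ b # Y (clockwise), the arc splits r into a region containing the
arms X together with the new arm (a,b) and a region containing Y together with
the new arm (b,a).\<close>
inductive pbs_step :: "state \<Rightarrow> lbl set \<Rightarrow> state \<Rightarrow> bool" where
  "rotate k r = a # X @ b # Y \<Longrightarrow>
   pbs_step (A @ r # B) {a, b} (A @ (X @ [Pair a b]) # (Y @ [Pair b a]) # B)"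

definition pbs_final :: "state \<Rightarrow> bool" where
  "pbs_final s \<longleftrightarrow> \<not> (\<exists>m s'. pbs_step s m s')"

inductive pbs_play :: "state \<Rightarrow> lbl set list \<Rightarrow> bool" where
  stop: "pbs_final s \<Longrightarrow> pbs_play s []"
| move: "pbs_step s m s' \<Longrightarrow> pbs_play s' ms \<Longrightarrow> pbs_play s (m # ms)"

definition pbs_init :: "nat \<Rightarrow> state" where
  "pbs_init n = [map Base [1..<n+1]]"

definition pbs_lines :: "nat \<Rightarrow> nat" where
  "pbs_lines n = card {ms. pbs_play (pbs_init n) ms}"

end

theory Submission
  imports Defs Complex_Main "HOL-Library.Multiset"
begin


lemma pascal_sum:
  fixes g :: "nat \<Rightarrow> real"
  shows "(\<Sum>k\<le>Suc n. real (Suc n choose k) * g k) =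
         (\<Sum>k\<le>n. real (n choose k) * g k) + (\<Sum>k\<le>n. real (n choose k) * g (Suc k))"
proof -
  have "(\<Sum>k\<le>Suc n. real (Suc n choose k) * g k) = g 0 + (\<Sum>k\<le>n. real (Suc n choose Suc k) * g (Suc k))"
    by (subst sum.atMost_Suc_shift) simp
  also have "\<dots> = g 0 + (\<Sum>k\<le>n. real (n choose Suc k) * g (Suc k)) + (\<Sum>k\<le>n. real (n choose k) * g (Suc k))"
    by (simp add: sum.distrib algebra_simps)
  also have "g 0 + (\<Sum>k\<le>n. real (n choose Suc k) * g (Suc k)) = (\<Sum>k\<le>Suc n. real (n choose k) * g k)"
    by (subst sum.atMost_Suc_shift) simp
  also have "\<dots> = (\<Sum>k\<le>n. real (n choose k) * g k)"
    by simp
  finally show ?thesis .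
qed

lemma fin_diff:
  "j < n \<Longrightarrow> (\<Sum>k\<le>n. real (n choose k) * ((-1)^k * (real k + a)^j)) = 0"
proof (induction n arbitrary: j a)
  case 0 then show ?case by simp
next
  case (Suc n)
  have "(\<Sum>k\<le>Suc n. real (Suc n choose k) * ((-1)^k * (real k + a)^j))
     = (\<Sum>k\<le>n. real (n choose k) * ((-1)^k * ((real k + a)^j - (real k + a + 1)^j)))"
    by (subst pascal_sum) (simp add: sum.distrib[symmetric] algebra_simps)
  also have "\<dots> = 0"
  proof (cases j)
    case 0 then show ?thesis by simp
  next
    case (Suc j')
    have e: "(real k + a)^j - (real k + a + 1)^j = - (\<Sum>i<j. real (j choose i) * (real k + a)^i)" for k
    proof -
      have "(real k + a + 1)^j = (\<Sum>i\<le>j. real (j choose i) * (real k + a)^i)"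
        using binomial_ring[of "real k + a" 1 j] by simp
      also have "\<dots> = (\<Sum>i<j. real (j choose i) * (real k + a)^i) + (real k + a)^j"
        by (simp add: lessThan_Suc_atMost[symmetric])
      finally show ?thesis by simp
    qed
    have "(\<Sum>k\<le>n. real (n choose k) * ((-1)^k * ((real k + a)^j - (real k + a + 1)^j)))
        = - (\<Sum>i<j. real (j choose i) * (\<Sum>k\<le>n. real (n choose k) * ((-1)^k * (real k + a)^i)))"
      unfolding e by (simp add: sum_distrib_left sum_negf sum.swap[of _ "{..n}"] algebra_simps)
    also have "\<dots> = 0"
    proof -
      have "\<forall>i\<in>{..<j}. real (j choose i) * (\<Sum>k\<le>n. real (n choose k) * ((-1)^k * (real k + a)^i)) = 0"
        using Suc.IH Suc.prems by auto
      then show ?thesis by (simp add: sum.neutral)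
    qed
    finally show ?thesis .
  qed
  finally show ?case .
qed

definition abelA :: "nat \<Rightarrow> real \<Rightarrow> real" where
  "abelA n y = (\<Sum>k\<le>n. real (n choose k) * real (k+1)^(k-1) * (y + real (n-k))^(n-k))"

lemma absorb_sum:
  "(\<Sum>k\<le>Suc n. real (Suc n choose k) * real (k+1)^(k-1) *
      (real (Suc n - k) * (y + real (Suc n-k))^(Suc n-k-1))) = real (Suc n) * abelA n (y+1)"
proof -
  have "(\<Sum>k\<le>Suc n. real (Suc n choose k) * real (k+1)^(k-1) *
      (real (Suc n - k) * (y + real (Suc n-k))^(Suc n-k-1)))
     = (\<Sum>k\<le>Suc n. real (Suc n) * (real (n choose k) * real (k+1)^(k-1) *
      (y + real (Suc n-k))^(Suc n-k-1)))"
  proof (rule sum.cong[OF refl])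
    fix k assume "k \<in> {..Suc n}"
    have "real (Suc n - k) * real (Suc n choose k) = real (Suc n) * real (n choose k)"
      using binomial_absorb_comp[of "Suc n" k] by (metis diff_Suc_1 of_nat_mult)
    then show "real (Suc n choose k) * real (k+1)^(k-1) *
      (real (Suc n - k) * (y + real (Suc n-k))^(Suc n-k-1)) = real (Suc n) * (real (n choose k) * real (k+1)^(k-1) *
      (y + real (Suc n-k))^(Suc n-k-1))"
    proof -
      have "real (Suc n choose k) * real (k+1)^(k-1) * (real (Suc n - k) * (y + real (Suc n-k))^(Suc n-k-1))
          = (real (Suc n - k) * real (Suc n choose k)) * (real (k+1)^(k-1) * (y + real (Suc n-k))^(Suc n-k-1))"
        by (simp only: mult.assoc mult.commute mult.left_commute)
      also have "\<dots> = real (Suc n) * (real (n choose k) * real (k+1)^(k-1) * (y + real (Suc n-k))^(Suc n-k-1))"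
        unfolding \<open>real (Suc n - k) * real (Suc n choose k) = real (Suc n) * real (n choose k)\<close>
        by (simp only: mult.assoc)
      finally show ?thesis .
    qed
  qed
  also have "\<dots> = real (Suc n) * abelA n (y+1)"
  proof -
    have "(\<Sum>k\<le>Suc n. real (n choose k) * real (k+1)^(k-1) * (y + real (Suc n-k))^(Suc n-k-1))
        = (\<Sum>k\<le>n. real (n choose k) * real (k+1)^(k-1) * (y + real (Suc n-k))^(Suc n-k-1))"
      by (subst sum.atMost_Suc) simp
    also have "\<dots> = abelA n (y+1)"
      unfolding abelA_def
    proof (rule sum.cong[OF refl])
      fix k assume "k \<in> {..n}"
      then have "Suc n - k = Suc (n - k)" by auto
      then show "real (n choose k) * real (k+1)^(k-1) * (y + real (Suc n-k))^(Suc n-k-1) =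
         real (n choose k) * real (k+1)^(k-1) * (y + 1 + real (n - k)) ^ (n - k)"
        by (simp add: algebra_simps)
    qed
    finally show ?thesis by (simp add: sum_distrib_left[symmetric])
  qed
  finally show ?thesis .
qed

lemma abelA_deriv:
  "DERIV (abelA (Suc n)) y :> real (Suc n) * abelA n (y+1)"
proof -
  have d: "DERIV (abelA (Suc n)) y :> (\<Sum>k\<le>Suc n. real (Suc n choose k) * real (k+1)^(k-1) *
      (real (Suc n - k) * (y + real (Suc n-k))^(Suc n-k-1)))"
    unfolding abelA_def[abs_def]
    by (rule DERIV_cong, rule derivative_eq_intros, auto intro!: derivative_eq_intros sum.cong simp: ac_simps)
  then show ?thesis using absorb_sum by simp
qed

lemma abelA_eq: "abelA n y = (y + 1 + real n)^n"
proof (induction n arbitrary: y)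
  case 0 then show ?case by (simp add: abelA_def)
next
  case (Suc n)
  define f where "f y = abelA (Suc n) y - (y + 1 + real (Suc n))^(Suc n)" for y
  have "DERIV f x :> 0" for x
  proof -
    have aux: "real n * w^(n - Suc 0) * w = real n * w^n" for w :: real by (cases n) auto
    have d2: "DERIV (\<lambda>y. (y + 1 + real (Suc n))^(Suc n)) x :> real (Suc n) * (x + 1 + real (Suc n))^n"
    proof -
      have "DERIV (\<lambda>y. y + (1 + real (Suc n))) x :> 1" by (auto intro!: derivative_eq_intros)
      from DERIV_power_Suc[OF this, where n=n] show ?thesis by (simp add: add.assoc)
    qed
    have "DERIV f x :> real (Suc n) * abelA n (x+1) - real (Suc n) * (x + 1 + real (Suc n))^n"
      unfolding f_def[abs_def]
      by (rule DERIV_diff[OF abelA_deriv d2])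
    moreover have "real (Suc n) * abelA n (x+1) - real (Suc n) * (x + 1 + real (Suc n))^n = 0"
      using Suc.IH[of "x+1"] by (simp add: algebra_simps)
    ultimately show ?thesis by simp
  qed
  then have c: "f y = f (- 1 - real (Suc n))" by (intro DERIV_isconst_all) auto
  have "f (- 1 - real (Suc n)) = abelA (Suc n) (- 1 - real (Suc n))" by (simp add: f_def)
  also have "\<dots> = (\<Sum>k\<le>Suc n. (-1)^(Suc n) * (real (Suc n choose k) * ((-1)^k * (real k + 1)^n)))"
    unfolding abelA_def
  proof (rule sum.cong[OF refl])
    fix k assume k: "k \<in> {..Suc n}"
    have e1: "- 1 - real (Suc n) + real (Suc n - k) = - (real k + 1)" using k by auto
    have e2: "real (k+1)^(k-1) * (real k + 1)^(Suc n - k) = (real k + 1)^n"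
    proof (cases k)
      case 0 then show ?thesis by simp
    next
      case (Suc k') then show ?thesis using k by (simp add: power_add[symmetric])
    qed
    have e3: "((-1::real))^(Suc n - k) = (-1)^(Suc n) * (-1)^k"
    proof -
      have s1: "(-1::real)^k * (-1)^k = 1" by (simp add: power_mult_distrib[symmetric])
      have s2: "(-1::real)^(Suc n) = (-1)^(Suc n - k) * (-1)^k" using k by (simp add: power_add[symmetric])
      show ?thesis unfolding s2 by (simp add: mult.assoc s1)
    qed
    show "real (Suc n choose k) * real (k+1)^(k-1) * (- 1 - real (Suc n) + real (Suc n - k))^(Suc n - k)
        = (-1)^(Suc n) * (real (Suc n choose k) * ((-1)^k * (real k + 1)^n))"
      unfolding e1 power_minus[of "real k + 1"] e3 using e2 by (simp add: algebra_simps)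
  qed
  also have "\<dots> = (-1)^(Suc n) * (\<Sum>k\<le>Suc n. real (Suc n choose k) * ((-1)^k * (real k + 1)^n))"
    by (rule sum_distrib_left[symmetric])
  also have "\<dots> = 0"
    using fin_diff[of n "Suc n" 1] by (simp del: sum.atMost_Suc)
  finally show ?case using c by (simp add: f_def)
qed

definition abelD :: "nat \<Rightarrow> real" where
  "abelD m = (\<Sum>x\<le>m. real (m choose x) * real (x+1)^(x-1) * real (m-x+1)^(m-x-1))"

lemma abelD_eq: "abelD m * real (m+2) = 2 * real (m+2)^m"
proof (cases m)
  case 0 then show ?thesis by (simp add: abelD_def)
next
  case (Suc n)
  have t: "real (j+1)^(j-1) = (1 + real j)^j - real j * (1 + real j)^(j-1)" for j :: nat
    by (cases j) (auto simp: algebra_simps)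
  have tt: "c * real (j+1)^(j-1) = c * (1 + real j)^j - c * (real j * (1 + real j)^(j-1))" for c :: real and j :: nat
    by (subst t) (simp only: right_diff_distrib)
  have "abelD (Suc n) = (\<Sum>x\<le>Suc n. real (Suc n choose x) * real (x+1)^(x-1) * (1 + real (Suc n-x))^(Suc n-x))
     - (\<Sum>x\<le>Suc n. real (Suc n choose x) * real (x+1)^(x-1) * (real (Suc n - x) * (1 + real (Suc n-x))^(Suc n-x-1)))"
    unfolding abelD_def sum_subtractf[symmetric]
    by (rule sum.cong[OF refl], rule tt)
  also have "(\<Sum>x\<le>Suc n. real (Suc n choose x) * real (x+1)^(x-1) * (1 + real (Suc n-x))^(Suc n-x)) = abelA (Suc n) 1"
    unfolding abelA_def by simp
  also have "(\<Sum>x\<le>Suc n. real (Suc n choose x) * real (x+1)^(x-1) * (real (Suc n - x) * (1 + real (Suc n-x))^(Suc n-x-1)))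
      = real (Suc n) * abelA n 2"
    using absorb_sum[of n 1] by (simp add: add.commute)
  finally have "abelD (Suc n) = (3 + real n)^(Suc n) - real (Suc n) * (3 + real n)^n"
    by (simp add: abelA_eq algebra_simps)
  also have "\<dots> = 2 * (3 + real n)^n" by (simp add: algebra_simps)
  finally show ?thesis using Suc by (simp add: algebra_simps)
qed


lemma pair_sum:
  fixes h :: "nat \<Rightarrow> real"
  shows "(\<Sum>q<k. \<Sum>p<q. h (q-p)) = (\<Sum>d\<in>{1..<k}. real (k-d) * h d)"
proof (induction k)
  case 0 then show ?case by simp
next
  case (Suc k)
  have r: "(\<Sum>p<k. h (k-p)) = (\<Sum>d\<in>{1..<Suc k}. h d)"
    by (rule sum.reindex_bij_witness[where i="\<lambda>d. k-d" and j="\<lambda>p. k-p"]) auto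
  have a: "(\<Sum>d\<in>{1..<Suc k}. real (Suc k-d) * h d) = (\<Sum>d\<in>{1..<Suc k}. real (k-d) * h d) + (\<Sum>d\<in>{1..<Suc k}. h d)"
    unfolding sum.distrib[symmetric]
    by (rule sum.cong[OF refl]) (auto simp: Suc_diff_le algebra_simps)
  have b: "(\<Sum>d\<in>{1..<Suc k}. real (k-d) * h d) = (\<Sum>d\<in>{1..<k}. real (k-d) * h d)"
    by (simp add: sum.op_ivl_Suc)
  show ?case using Suc.IH r a b by simp
qed

definition w :: "nat \<Rightarrow> real" where
  "w k = real k ^ (k-2) / fact (k-1)"

lemma region_id: "(\<Sum>q<k. \<Sum>p<q. w (q-p) * w (k-(q-p))) = real (k-1) * w k"
proof -
  define S where "S = (\<Sum>d\<in>{1..<k}. real (k-d) * (w d * w (k-d)))"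
  have S1: "(\<Sum>q<k. \<Sum>p<q. w (q-p) * w (k-(q-p))) = S"
    unfolding S_def by (rule pair_sum)
  have S2: "S = (\<Sum>d\<in>{1..<k}. real d * (w d * w (k-d)))"
    unfolding S_def
    by (rule sum.reindex_bij_witness[where i="\<lambda>d. k-d" and j="\<lambda>d. k-d"]) (auto simp: mult.commute)
  have S3: "2 * S = real k * (\<Sum>d\<in>{1..<k}. w d * w (k-d))"
  proof -
    have "2 * S = S + (\<Sum>d\<in>{1..<k}. real d * (w d * w (k-d)))" using S2 by simp
    also have "\<dots> = (\<Sum>d\<in>{1..<k}. real k * (w d * w (k-d)))"
      unfolding S_def sum.distrib[symmetric]
      by (rule sum.cong[OF refl]) (auto simp: algebra_simps of_nat_diff)
    finally show ?thesis by (simp add: sum_distrib_left)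
  qed
  show ?thesis
  proof (cases "k < 2")
    case True
    then have "{1..<k} = {}" by auto
    then show ?thesis using True S1 unfolding S_def by (cases k) auto
  next
    case False
    then obtain m where m: "k = m + 2" by (metis add.commute le_Suc_ex not_less)
    have "(\<Sum>d\<in>{1..<k}. w d * w (k-d)) = (\<Sum>x\<le>m. w (x+1) * w (m+1-x))"
      unfolding m
      by (rule sum.reindex_bij_witness[where i="\<lambda>x. x+1" and j="\<lambda>d. d-1"]) auto
    also have "\<dots> = (\<Sum>x\<le>m. real (m choose x) * real (x+1)^(x-1) * real (m-x+1)^(m-x-1) / fact m)"
    proof (rule sum.cong[OF refl])
      fix x assume x: "x \<in> {..m}"
      have c: "real (m choose x) = fact m / (fact x * fact (m-x))" using x by (simp add: binomial_fact)
      have e1: "m + 1 - x - 2 = m - x - 1" "m + 1 - x - 1 = m - x" "m + 1 - x = m - x + 1" using x by auto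
      show "w (x+1) * w (m+1-x) = real (m choose x) * real (x+1)^(x-1) * real (m-x+1)^(m-x-1) / fact m"
        unfolding c w_def e1 by (simp add: field_simps)
    qed
    also have "\<dots> = abelD m / fact m"
      unfolding abelD_def sum_divide_distrib by simp
    finally have "2 * S = real k * abelD m / fact m" using S3 by simp
    also have "\<dots> = 2 * real (m+2)^m / fact m" using abelD_eq[of m] unfolding m by (simp add: mult.commute)
    finally have "S = real (m+2)^m / fact m" by simp
    also have "\<dots> = real (k-1) * w k"
    proof -
      have "real (k-1) * w k = ((real m + 1) * real (m+2)^m) / ((real m + 1) * fact m)"
        unfolding w_def m by (simp add: algebra_simps)
      also have "\<dots> = real (m+2)^m / fact m"
        by (rule mult_divide_mult_cancel_left) simp
      finally show ?thesis by simp
    qed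
    finally show ?thesis using S1 by simp
  qed
qed



definition Xs :: "'a list \<Rightarrow> nat \<Rightarrow> nat \<Rightarrow> 'a list" where
  "Xs r q p = take (q-p-1) (drop (Suc p) r)"
definition Ys :: "'a list \<Rightarrow> nat \<Rightarrow> nat \<Rightarrow> 'a list" where
  "Ys r q p = drop (Suc q) r @ take p r"

lemma rot_decomp:
  assumes "p < q" "q < length r"
  shows "rotate p r = r!p # Xs r q p @ r!q # Ys r q p"
proof -
  have "rotate p r = drop p r @ take p r"
    using assms by (simp add: rotate_drop_take)
  also have "drop p r = r!p # drop (Suc p) r"
    using assms by (simp add: Cons_nth_drop_Suc)
  also have "drop (Suc p) r = take (q-p-1) (drop (Suc p) r) @ drop (q-p-1) (drop (Suc p) r)"
    by (rule append_take_drop_id[symmetric])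
  also have "drop (q-p-1) (drop (Suc p) r) = drop q r"
    using assms by simp
  also have "drop q r = r!q # drop (Suc q) r"
    using assms by (simp add: Cons_nth_drop_Suc)
  finally show ?thesis by (simp add: Xs_def Ys_def)
qed

lemma len_Xs: "p < q \<Longrightarrow> q < length r \<Longrightarrow> length (Xs r q p) = q - p - 1"
  by (simp add: Xs_def)
lemma len_Ys: "p < q \<Longrightarrow> q < length r \<Longrightarrow> length (Ys r q p) = length r - q - 1 + p"
  by (simp add: Ys_def)

lemma mset_rotate: "mset (rotate n xs) = mset xs"
proof -
  have "mset (rotate n xs) = mset (drop (n mod length xs) xs @ take (n mod length xs) xs)"
    by (simp add: rotate_drop_take)
  also have "\<dots> = mset xs"
    by (metis mset_append union_commute append_take_drop_id)
  finally show ?thesis .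
qed

definition split_st :: "state \<Rightarrow> nat \<times> nat \<times> nat \<Rightarrow> state" where
  "split_st s t = (case t of (i,q,p) \<Rightarrow>
     take i s @ (Xs (s!i) q p @ [Pair (s!i!p) (s!i!q)]) # (Ys (s!i) q p @ [Pair (s!i!q) (s!i!p)]) # drop (Suc i) s)"

definition mv :: "state \<Rightarrow> nat \<times> nat \<times> nat \<Rightarrow> lbl set" where
  "mv s t = (case t of (i,q,p) \<Rightarrow> {s!i!p, s!i!q})"

definition Tr :: "state \<Rightarrow> (nat \<times> nat \<times> nat) set" where
  "Tr s = Sigma {..<length s} (\<lambda>i. Sigma {..<length (s!i)} (\<lambda>q. {..<q}))"

lemma Tr_iff: "(i,q,p) \<in> Tr s \<longleftrightarrow> i < length s \<and> q < length (s!i) \<and> p < q"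
  by (auto simp: Tr_def)

lemma finite_Tr: "finite (Tr s)"
  unfolding Tr_def by (intro finite_SigmaI) auto

lemma step_split:
  assumes "t \<in> Tr s"
  shows "pbs_step s (mv s t) (split_st s t)"
proof -
  obtain i q p where t: "t = (i,q,p)" by (cases t) auto
  with assms have i: "i < length s" and pq: "p < q" "q < length (s!i)" by (auto simp: Tr_iff)
  have s: "s = take i s @ s!i # drop (Suc i) s" using i by (simp add: id_take_nth_drop)
  have "pbs_step (take i s @ s!i # drop (Suc i) s) {s!i!p, s!i!q}
     (take i s @ (Xs (s!i) q p @ [Pair (s!i!p) (s!i!q)]) # (Ys (s!i) q p @ [Pair (s!i!q) (s!i!p)]) # drop (Suc i) s)"
    by (rule pbs_step.intros, rule rot_decomp[OF pq])
  then show ?thesis using s t by (simp add: mv_def split_st_def)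
qed


lemma step_inv:
  assumes "pbs_step s m s'"
  shows "\<exists>t\<in>Tr s. m = mv s t \<and> mset s' = mset (split_st s t)"
proof -
  obtain k r a X b Y A B where s: "s = A @ r # B" and rot: "rotate k r = a # X @ b # Y" and m: "m = {a,b}"
    and s': "s' = A @ (X @ [Pair a b]) # (Y @ [Pair b a]) # B"
    using assms by (cases rule: pbs_step.cases) blast
  define i where "i = length A"
  have si: "s!i = r" "take i s = A" "drop (Suc i) s = B" "i < length s" by (auto simp: s i_def)
  define L where "L = length r"
  have L: "L = length X + length Y + 2"
    using arg_cong[OF rot, of length] by (simp add: L_def)
  define p0 where "p0 = k mod L"
  define u where "u = length X + 1"
  have p0L: "p0 < L" using L by (simp add: p0_def)
  have rp0: "rotate p0 r = a # X @ b # Y" using rot by (metis L_def p0_def rotate_conv_mod)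
  show ?thesis
  proof (cases "p0 + u < L")
    case True
    define q where "q = p0 + u"
    have pq: "p0 < q" "q < length r" using True by (auto simp: q_def u_def L_def)
    have d: "rotate p0 r = r!p0 # Xs r q p0 @ r!q # Ys r q p0" by (rule rot_decomp[OF pq])
    have lx: "length (Xs r q p0) = length X" using len_Xs[OF pq] by (simp add: q_def u_def)
    from d rp0 have "a = r!p0" "X @ b # Y = Xs r q p0 @ r!q # Ys r q p0" by auto
    with lx have e: "a = r!p0" "X = Xs r q p0" "b = r!q" "Y = Ys r q p0"
      by (auto simp: append_eq_append_conv)
    have t: "(i,q,p0) \<in> Tr s" using pq si by (simp add: Tr_iff)
    show ?thesis
      by (rule bexI[OF _ t]) (simp add: m s' split_st_def mv_def si e)
  next
    case False
    define q0 where "q0 = p0 + u - L"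
    have pq: "q0 < p0" "p0 < length r" using False p0L L by (auto simp: q0_def u_def L_def)
    have d: "rotate q0 r = r!q0 # Xs r p0 q0 @ r!p0 # Ys r p0 q0" by (rule rot_decomp[OF pq])
    have lenl: "length (r!q0 # Xs r p0 q0) = p0 - q0" using len_Xs[OF pq] pq by simp
    have "rotate p0 r = rotate (p0 - q0) (rotate q0 r)" using pq by (simp add: rotate_rotate)
    also have "\<dots> = rotate (length (r!q0 # Xs r p0 q0)) ((r!q0 # Xs r p0 q0) @ (r!p0 # Ys r p0 q0))"
      using d lenl by simp
    also have "\<dots> = r!p0 # Ys r p0 q0 @ r!q0 # Xs r p0 q0"
      by (simp only: rotate_append) simp
    finally have d2: "rotate p0 r = r!p0 # Ys r p0 q0 @ r!q0 # Xs r p0 q0" .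
    have ly: "length (Ys r p0 q0) = length X" using len_Ys[OF pq] False pq
      by (simp add: q0_def u_def L_def)
    from d2 rp0 have "a = r!p0" "X @ b # Y = Ys r p0 q0 @ r!q0 # Xs r p0 q0" by auto
    with ly have e: "a = r!p0" "X = Ys r p0 q0" "b = r!q0" "Y = Xs r p0 q0"
      by (auto simp: append_eq_append_conv)
    have t: "(i,p0,q0) \<in> Tr s" using pq si by (simp add: Tr_iff)
    show ?thesis
      by (rule bexI[OF _ t]) (simp add: m s' split_st_def mv_def si e insert_commute)
  qed
qed


lemma mset_sim:
  assumes "pbs_step s m s'" "mset s = mset t"
  shows "\<exists>t'. pbs_step t m t' \<and> mset s' = mset t'"
proof -
  obtain k r a X b Y A B where s: "s = A @ r # B" and rot: "rotate k r = a # X @ b # Y" and m: "m = {a,b}"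
    and s': "s' = A @ (X @ [Pair a b]) # (Y @ [Pair b a]) # B"
    using assms(1) by (cases rule: pbs_step.cases) blast
  have "r \<in> set t" using assms(2) s by (metis in_set_conv_decomp mset_eq_setD)
  then obtain A' B' where t: "t = A' @ r # B'" by (meson split_list)
  have st: "pbs_step t m (A' @ (X @ [Pair a b]) # (Y @ [Pair b a]) # B')"
    unfolding t m by (rule pbs_step.intros[OF rot])
  have "mset (A @ B) = mset (A' @ B')" using assms(2) unfolding s t by simp
  then have "mset s' = mset (A' @ (X @ [Pair a b]) # (Y @ [Pair b a]) # B')"
    unfolding s' by (simp add: union_assoc)
  with st show ?thesis by blast
qed

lemma final_mset: "mset s = mset t \<Longrightarrow> pbs_final s \<Longrightarrow> pbs_final t"
  unfolding pbs_final_def by (metis mset_sim)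

lemma play_mset: "pbs_play s ms \<Longrightarrow> mset s = mset t \<Longrightarrow> pbs_play t ms"
proof (induction arbitrary: t rule: pbs_play.induct)
  case (stop s)
  then show ?case using final_mset pbs_play.stop by blast
next
  case (move s m s' ms)
  then obtain t' where "pbs_step t m t'" "mset s' = mset t'" using mset_sim by blast
  then show ?case using move pbs_play.move by blast
qed

lemma final_iff: "pbs_final s \<longleftrightarrow> Tr s = {}"
  unfolding pbs_final_def using step_split step_inv by blast

definition plays :: "state \<Rightarrow> lbl set list set" where
  "plays s = {ms. pbs_play s ms}"

lemma plays_decomp:
  "plays s = (if Tr s = {} then {[]} else (\<Union>t\<in>Tr s. (Cons (mv s t)) ` plays (split_st s t)))"
proof (cases "Tr s = {}")
  case True
  then have f: "pbs_final s" using final_iff by blast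
  have "pbs_play s ms \<longleftrightarrow> ms = []" for ms
  proof
    assume "pbs_play s ms" then show "ms = []"
      using f by cases (auto simp: pbs_final_def)
  next
    assume "ms = []" then show "pbs_play s ms" using f pbs_play.stop by simp
  qed
  then show ?thesis using True by (auto simp: plays_def)
next
  case False
  then have nf: "\<not> pbs_final s" using final_iff by blast
  have "pbs_play s ms \<longleftrightarrow> (\<exists>t\<in>Tr s. \<exists>ms'. ms = mv s t # ms' \<and> pbs_play (split_st s t) ms')" for ms
  proof
    assume "pbs_play s ms" then show "\<exists>t\<in>Tr s. \<exists>ms'. ms = mv s t # ms' \<and> pbs_play (split_st s t) ms'"
    proof cases
      case stop then show ?thesis using nf by simp
    next
      case (move m s' ms')
      then obtain t where "t \<in> Tr s" "m = mv s t" "mset s' = mset (split_st s t)" using step_inv by blast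
      then show ?thesis using move play_mset by blast
    qed
  next
    assume "\<exists>t\<in>Tr s. \<exists>ms'. ms = mv s t # ms' \<and> pbs_play (split_st s t) ms'"
    then show "pbs_play s ms" using step_split pbs_play.move by blast
  qed
  then show ?thesis using False by (auto simp: plays_def)
qed


fun psub :: "lbl \<Rightarrow> lbl \<Rightarrow> bool" where
  "psub x (Base n) = False"
| "psub x (Pair u v) = (x = u \<or> x = v \<or> psub x u \<or> psub x v)"

lemma psub_size: "psub x y \<Longrightarrow> size x < size y"
  by (induction y) auto

lemma psub_PairD: "psub (Pair u v) y \<Longrightarrow> psub u y \<and> psub v y"
  by (induction y) auto

definition good :: "state \<Rightarrow> bool" where
  "good s \<longleftrightarrow> distinct (concat s) \<and> (\<forall>x\<in>set (concat s). \<forall>y\<in>set (concat s). \<not> psub x y)"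

lemma dist_count: "distinct xs \<longleftrightarrow> (\<forall>x. count (mset xs) x \<le> 1)"
proof (induction xs)
  case Nil then show ?case by simp
next
  case (Cons a xs)
  show ?case
  proof
    assume "distinct (a # xs)" then show "\<forall>x. count (mset (a # xs)) x \<le> 1"
      using Cons by (auto simp: count_eq_zero_iff)
  next
    assume h: "\<forall>x. count (mset (a # xs)) x \<le> 1"
    then have "count (mset xs) a = 0" by (metis add_le_same_cancel2 count_add_mset not_one_le_zero le_zero_eq
       mset.simps(2) le_add_same_cancel2 Suc_eq_plus1 Suc_le_mono)
    moreover have "\<forall>x. count (mset xs) x \<le> 1" using h by (metis count_add_mset le_SucI le_Suc_eq mset.simps(2) Suc_le_mono)
    ultimately show "distinct (a # xs)" using Cons by (simp add: count_eq_zero_iff)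
  qed
qed

lemma nth_inj:
  "distinct (concat s) \<Longrightarrow> i < length s \<Longrightarrow> j < length s \<Longrightarrow> p < length (s!i) \<Longrightarrow>
   p' < length (s!j) \<Longrightarrow> s!i!p = s!j!p' \<Longrightarrow> i = j \<and> p = p'"
proof (induction s arbitrary: i j)
  case Nil then show ?case by simp
next
  case (Cons r s)
  have dr: "distinct r" and ds: "distinct (concat s)" and disj: "set r \<inter> set (concat s) = {}"
    using Cons.prems(1) by (simp_all only: concat.simps distinct_append)
  have mem: "s!k!x \<in> set (concat s)" if "k < length s" "x < length (s!k)" for k x
  proof -
    have "s!k \<in> set s" using that by simp
    moreover have "s!k!x \<in> set (s!k)" using that by simp
    ultimately show ?thesis by auto
  qed
  show ?case
  proof (cases i)
    case 0
    show ?thesis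
    proof (cases j)
      case 0
      have "r!p = r!p'" "p < length r" "p' < length r" using Cons.prems(4,5,6) \<open>i = 0\<close> 0 by simp_all
      then have "p = p'" using dr by (simp add: nth_eq_iff_index_eq)
      then show ?thesis using \<open>i = 0\<close> 0 by simp
    next
      case (Suc j')
      have "j' < length s" "p' < length (s!j')" using Cons.prems(3,5) Suc by simp_all
      then have "s!j'!p' \<in> set (concat s)" by (rule mem)
      moreover have "r!p \<in> set r" using Cons.prems(4) \<open>i = 0\<close> by simp
      moreover have "r!p = s!j'!p'" using Cons.prems(6) \<open>i = 0\<close> Suc by simp
      ultimately have "s!j'!p' \<in> set r \<inter> set (concat s)" by (simp only: IntI)
      then show ?thesis using disj by (simp only: empty_iff)
    qed
  next
    case (Suc i')
    show ?thesis
    proof (cases j)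
      case 0
      have "i' < length s" "p < length (s!i')" using Cons.prems(2,4) Suc by simp_all
      then have "s!i'!p \<in> set (concat s)" by (rule mem)
      moreover have "r!p' \<in> set r" using Cons.prems(5) 0 by simp
      moreover have "s!i'!p = r!p'" using Cons.prems(6) 0 Suc by simp
      ultimately have "r!p' \<in> set r \<inter> set (concat s)" by (simp only: IntI)
      then show ?thesis using disj by (simp only: empty_iff)
    next
      case (Suc j')
      have "i' = j' \<and> p = p'"
        using Cons.IH[OF ds, of i' j'] Cons.prems(2-6) \<open>i = Suc i'\<close> Suc by simp
      then show ?thesis using \<open>i = Suc i'\<close> Suc by simp
    qed
  qed
qed

lemma mv_inj:
  assumes "good s" "t1 \<in> Tr s" "t2 \<in> Tr s" "mv s t1 = mv s t2"
  shows "t1 = t2"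
proof -
  obtain i q p where t1: "t1 = (i,q,p)" by (cases t1) auto
  obtain i' q' p' where t2: "t2 = (i',q',p')" by (cases t2) auto
  have d: "distinct (concat s)" using assms(1) by (simp add: good_def)
  have r1: "i < length s" "q < length (s!i)" "p < q" using assms(2) t1 by (auto simp: Tr_iff)
  have r2: "i' < length s" "q' < length (s!i')" "p' < q'" using assms(3) t2 by (auto simp: Tr_iff)
  have e: "{s!i!p, s!i!q} = {s!i'!p', s!i'!q'}" using assms(4) t1 t2 by (simp add: mv_def)
  have pl: "p < length (s!i)" "p' < length (s!i')" using r1 r2 by auto
  from e have "(s!i!p = s!i'!p' \<and> s!i!q = s!i'!q') \<or> (s!i!p = s!i'!q' \<and> s!i!q = s!i'!p')"
    by (simp add: doubleton_eq_iff)
  then show ?thesis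
  proof
    assume h: "s!i!p = s!i'!p' \<and> s!i!q = s!i'!q'"
    have "i = i' \<and> p = p'" using nth_inj[OF d r1(1) r2(1) pl(1) pl(2)] h by blast
    moreover have "i = i' \<and> q = q'" using nth_inj[OF d r1(1) r2(1) r1(2) r2(2)] h by blast
    ultimately show ?thesis using t1 t2 by simp
  next
    assume h: "s!i!p = s!i'!q' \<and> s!i!q = s!i'!p'"
    have "i = i' \<and> p = q'" using nth_inj[OF d r1(1) r2(1) pl(1) r2(2)] h by blast
    moreover have "i = i' \<and> q = p'" using nth_inj[OF d r1(1) r2(1) r1(2) pl(2)] h by blast
    ultimately show ?thesis using r1 r2 by simp
  qed
qed

lemma mset_split:
  assumes "(i,q,p) \<in> Tr s"
  shows "mset (concat (split_st s (i,q,p))) + {#s!i!p, s!i!q#} =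
         mset (concat s) + {#Pair (s!i!p) (s!i!q), Pair (s!i!q) (s!i!p)#}"
proof -
  have r: "i < length s" "q < length (s!i)" "p < q" using assms by (auto simp: Tr_iff)
  have mr: "mset (s!i) = mset (Xs (s!i) q p) + mset (Ys (s!i) q p) + {#s!i!p, s!i!q#}"
    using arg_cong[OF rot_decomp[OF r(3) r(2)], of mset] by (simp add: mset_rotate)
  have "concat s = concat (take i s) @ s!i @ concat (drop (Suc i) s)"
    using r by (metis concat.simps(2) concat_append id_take_nth_drop)
  then have "mset (concat s) = mset (concat (take i s)) + mset (s!i) + mset (concat (drop (Suc i) s))"
    by (metis mset_append union_assoc)
  then show ?thesis using mr by (simp add: split_st_def)
qed

lemma good_split:
  assumes g: "good s" and t: "t \<in> Tr s"
  shows "good (split_st s t)"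
proof -
  obtain i q p where tt: "t = (i,q,p)" by (cases t) auto
  have r: "i < length s" "q < length (s!i)" "p < q" using t tt by (auto simp: Tr_iff)
  define a where "a = s!i!p"
  define b where "b = s!i!q"
  define Om where "Om = mset (concat s)"
  define Nm where "Nm = mset (concat (split_st s t))"
  have d: "distinct (concat s)" and ps: "\<forall>x\<in>set (concat s). \<forall>y\<in>set (concat s). \<not> psub x y"
    using g by (auto simp: good_def)
  have eq: "Nm + {#a, b#} = Om + {#Pair a b, Pair b a#}"
    using mset_split[of i q p s] t tt by (simp add: Nm_def Om_def a_def b_def)
  have aO: "a \<in> set (concat s)" and bO: "b \<in> set (concat s)" using r by (auto simp: a_def b_def intro!: bexI[of _ "s!i"])
  have ab: "a \<noteq> b" using nth_inj[OF d, of i i p q] r by (auto simp: a_def b_def)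
  have cO: "\<forall>x. count Om x \<le> 1" using d by (simp add: Om_def dist_count)
  have sz: "size a < size (Pair a b)" "size b < size (Pair a b)" "size a < size (Pair b a)" "size b < size (Pair b a)"
    by auto
  have nPab: "Pair a b \<notin> set (concat s)" using ps aO by force
  have nPba: "Pair b a \<notin> set (concat s)" using ps bO by force
  have cnt: "count Nm x + count {#a, b#} x = count Om x + count {#Pair a b, Pair b a#} x" for x
    using arg_cong[OF eq, of "\<lambda>M. count M x"] by (simp only: count_union)
  have cPab: "count Om (Pair a b) = 0" "count Om (Pair b a) = 0" using nPab nPba by (auto simp: Om_def)
  have neq: "Pair a b \<noteq> Pair b a" using ab by simp
  have cN: "count Nm x \<le> 1" for x
  proof -
    have "x \<noteq> Pair a b \<Longrightarrow> x \<noteq> Pair b a \<Longrightarrow> count Nm x \<le> count Om x" using cnt[of x] by auto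
    moreover have "count Nm (Pair a b) \<le> 1" using cnt[of "Pair a b"] cPab neq by auto
    moreover have "count Nm (Pair b a) \<le> 1" using cnt[of "Pair b a"] cPab neq by auto
    ultimately show ?thesis using cO[rule_format, of x] by fastforce
  qed
  have cNa: "count Nm a = 0" "count Nm b = 0"
    using cnt[of a] cnt[of b] cO[rule_format, of a] cO[rule_format, of b] ab sz by auto
  have setN: "x \<in> set (concat (split_st s t)) \<Longrightarrow> (x \<in> set (concat s) \<and> x \<noteq> a \<and> x \<noteq> b) \<or> x = Pair a b \<or> x = Pair b a" for x
  proof -
    assume "x \<in> set (concat (split_st s t))"
    then have "count Nm x > 0" by (simp add: Nm_def)
    then have "x \<noteq> a" "x \<noteq> b" using cNa by (metis less_irrefl)+
    moreover have "count Om x > 0 \<or> x = Pair a b \<or> x = Pair b a"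
    proof (rule ccontr)
      assume "\<not> (count Om x > 0 \<or> x = Pair a b \<or> x = Pair b a)"
      then have "count Om x + count {#Pair a b, Pair b a#} x = 0" by (auto simp: not_in_iff)
      with cnt[of x] \<open>count Nm x > 0\<close> show False by linarith
    qed
    ultimately show ?thesis by (auto simp: Om_def)
  qed
  have dN: "distinct (concat (split_st s t))" using cN by (simp add: dist_count Nm_def)
  have pN: "\<not> psub x y" if x: "x \<in> set (concat (split_st s t))" and y: "y \<in> set (concat (split_st s t))" for x y
  proof
    assume h: "psub x y"
    from setN[OF x] setN[OF y] h ps aO bO psub_size[OF h] show False
      by (auto dest: psub_PairD psub_size)
  qed
  show ?thesis using dN pN by (simp add: good_def)
qed


definition Mv :: "state \<Rightarrow> nat" where
  "Mv s = sum_list (map (\<lambda>r. length r - 1) s)"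

definition Pw :: "state \<Rightarrow> real" where
  "Pw s = prod_list (map (\<lambda>r. w (length r)) s)"

definition V :: "state \<Rightarrow> real" where
  "V s = fact (Mv s) * Pw s"

lemma Mv_decomp: "i < length s \<Longrightarrow> Mv s = Mv (take i s) + (length (s!i) - 1) + Mv (drop (Suc i) s)"
  unfolding Mv_def by (subst id_take_nth_drop[of i s]) simp_all

lemma Pw_decomp: "i < length s \<Longrightarrow> Pw s = Pw (take i s) * (w (length (s!i)) * Pw (drop (Suc i) s))"
  unfolding Pw_def by (subst id_take_nth_drop[of i s]) simp_all

lemma split_facts:
  assumes "(i,q,p) \<in> Tr s"
  shows "Mv (split_st s (i,q,p)) = Mv s - 1" "Mv s \<ge> 1"
    "Pw (split_st s (i,q,p)) = Pw (take i s) * Pw (drop (Suc i) s) * (w (q-p) * w (length (s!i) - (q-p)))"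
proof -
  have r: "i < length s" "q < length (s!i)" "p < q" using assms by (auto simp: Tr_iff)
  have l1: "length (Xs (s!i) q p @ [Pair (s!i!p) (s!i!q)]) = q - p" using len_Xs[OF r(3) r(2)] r by simp
  have l2: "length (Ys (s!i) q p @ [Pair (s!i!q) (s!i!p)]) = length (s!i) - (q - p)" using len_Ys[OF r(3) r(2)] r by simp
  have m: "Mv s = Mv (take i s) + (length (s!i) - 1) + Mv (drop (Suc i) s)" by (rule Mv_decomp[OF r(1)])
  have "Mv (split_st s (i,q,p)) = Mv (take i s) + ((q - p - 1) + (length (s!i) - (q-p) - 1)) + Mv (drop (Suc i) s)"
    unfolding split_st_def Mv_def using l1 l2 by simp
  then show "Mv (split_st s (i,q,p)) = Mv s - 1" using m r by simp
  show "Mv s \<ge> 1" using m r by simp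
  show "Pw (split_st s (i,q,p)) = Pw (take i s) * Pw (drop (Suc i) s) * (w (q-p) * w (length (s!i) - (q-p)))"
    unfolding split_st_def Pw_def using l1 l2 by simp
qed

lemma Mv_nth: "real (Mv s) = (\<Sum>i<length s. real (length (s!i) - 1))"
proof -
  have "Mv s = (\<Sum>i = 0..<length s. map (\<lambda>r. length r - 1) s ! i)"
    unfolding Mv_def by (subst sum_list_sum_nth) simp
  also have "\<dots> = (\<Sum>i<length s. length (s!i) - 1)"
    by (simp add: atLeast0LessThan)
  finally show ?thesis by simp
qed

lemma V_sum:
  assumes ne: "Tr s \<noteq> {}"
  shows "(\<Sum>t\<in>Tr s. V (split_st s t)) = V s"
proof -
  obtain t0 where t0: "t0 \<in> Tr s" using ne by blast
  have M1: "Mv s \<ge> 1" using t0 split_facts(2)[of _ _ _ s] by (cases t0) auto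
  define c where "c = (fact (Mv s - 1) :: real)"
  have "(\<Sum>t\<in>Tr s. V (split_st s t)) = (\<Sum>i<length s. \<Sum>q<length (s!i). \<Sum>p<q. V (split_st s (i,q,p)))"
    unfolding Tr_def by (simp add: sum.Sigma)
  also have "\<dots> = (\<Sum>i<length s. c * (Pw (take i s) * Pw (drop (Suc i) s)) *
        (\<Sum>q<length (s!i). \<Sum>p<q. w (q-p) * w (length (s!i) - (q-p))))"
  proof (rule sum.cong[OF refl])
    fix i assume i: "i \<in> {..<length s}"
    have "(\<Sum>q<length (s!i). \<Sum>p<q. V (split_st s (i,q,p))) =
       (\<Sum>q<length (s!i). \<Sum>p<q. c * (Pw (take i s) * Pw (drop (Suc i) s)) * (w (q-p) * w (length (s!i) - (q-p))))"
    proof (intro sum.cong refl)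
      fix q p assume "q \<in> {..<length (s!i)}" "p \<in> {..<q}"
      then have "(i,q,p) \<in> Tr s" using i by (auto simp: Tr_iff)
      from split_facts[OF this] show "V (split_st s (i,q,p)) = c * (Pw (take i s) * Pw (drop (Suc i) s)) * (w (q-p) * w (length (s!i) - (q-p)))"
        unfolding V_def c_def by (simp add: mult.assoc)
    qed
    then show "(\<Sum>q<length (s!i). \<Sum>p<q. V (split_st s (i,q,p))) = c * (Pw (take i s) * Pw (drop (Suc i) s)) *
        (\<Sum>q<length (s!i). \<Sum>p<q. w (q-p) * w (length (s!i) - (q-p)))"
      by (simp add: sum_distrib_left)
  qed
  also have "\<dots> = (\<Sum>i<length s. c * Pw s * real (length (s!i) - 1))"
  proof (rule sum.cong[OF refl])
    fix i assume "i \<in> {..<length s}"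
    then have "Pw s = Pw (take i s) * (w (length (s!i)) * Pw (drop (Suc i) s))" by (simp add: Pw_decomp)
    then show "c * (Pw (take i s) * Pw (drop (Suc i) s)) *
        (\<Sum>q<length (s!i). \<Sum>p<q. w (q-p) * w (length (s!i) - (q-p))) = c * Pw s * real (length (s!i) - 1)"
      unfolding region_id by (simp add: algebra_simps)
  qed
  also have "\<dots> = c * Pw s * real (Mv s)"
    by (simp add: Mv_nth sum_distrib_left)
  also have "\<dots> = V s"
    unfolding V_def c_def using fact_reduce[of "Mv s", where 'a=real] M1 by (simp add: algebra_simps)
  finally show ?thesis .
qed

lemma Tr_empty:
  assumes "Tr s = {}"
  shows "V s = 1"
proof -
  have le: "\<forall>r\<in>set s. length r \<le> 1"
  proof
    fix r assume "r \<in> set s"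
    then obtain i where i: "i < length s" "s!i = r" by (meson in_set_conv_nth)
    show "length r \<le> 1"
    proof (rule ccontr)
      assume "\<not> length r \<le> 1"
      then have "(i,1,0) \<in> Tr s" using i by (auto simp: Tr_iff)
      then show False using assms by blast
    qed
  qed
  have w01: "k \<le> 1 \<Longrightarrow> w k = 1" for k by (cases k) (auto simp: w_def)
  have "Mv s = 0" unfolding Mv_def using le by (induction s) auto
  moreover have "Pw s = 1" unfolding Pw_def using le w01 by (induction s) auto
  ultimately show ?thesis by (simp add: V_def)
qed

lemma main_count:
  "Mv s = n \<Longrightarrow> good s \<Longrightarrow> finite (plays s) \<and> real (card (plays s)) = V s"
proof (induction n arbitrary: s rule: less_induct)
  case (less n)
  show ?case
  proof (cases "Tr s = {}")
    case True
    then show ?thesis using Tr_empty[OF True] plays_decomp[of s] by simp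
  next
    case False
    have IH: "finite (plays (split_st s t)) \<and> real (card (plays (split_st s t))) = V (split_st s t)"
      if t: "t \<in> Tr s" for t
    proof -
      obtain i q p where tt: "t = (i,q,p)" by (cases t) auto
      have "Mv (split_st s t) < n" using split_facts[of i q p s] t tt less.prems by auto
      moreover have "good (split_st s t)" using good_split[OF less.prems(2) t] .
      ultimately show ?thesis using less.IH by blast
    qed
    have pd: "plays s = (\<Union>t\<in>Tr s. (Cons (mv s t)) ` plays (split_st s t))"
      using plays_decomp[of s] False by simp
    have fin: "finite (plays s)" unfolding pd using finite_Tr IH by blast
    have "card (plays s) = (\<Sum>t\<in>Tr s. card ((Cons (mv s t)) ` plays (split_st s t)))"
      unfolding pd
    proof (rule card_UN_disjoint[OF finite_Tr])
      show "\<forall>t\<in>Tr s. finite ((Cons (mv s t)) ` plays (split_st s t))" using IH by blast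
      show "\<forall>t1\<in>Tr s. \<forall>t2\<in>Tr s. t1 \<noteq> t2 \<longrightarrow>
        (Cons (mv s t1)) ` plays (split_st s t1) \<inter> (Cons (mv s t2)) ` plays (split_st s t2) = {}"
        using mv_inj[OF less.prems(2)] by blast
    qed
    also have "\<dots> = (\<Sum>t\<in>Tr s. card (plays (split_st s t)))"
      by (intro sum.cong refl card_image) (simp add: inj_on_def)
    finally have "real (card (plays s)) = (\<Sum>t\<in>Tr s. V (split_st s t))"
      using IH by simp
    then show ?thesis using fin V_sum[OF False] by simp
  qed
qed

theorem theorem3:
  fixes n :: nat
  assumes "n \<ge> 1"
  shows "finite {ms. pbs_play (pbs_init n) ms} \<and> pbs_lines n = n ^ (n - 2)"
proof -
  have g: "good (pbs_init n)"
    unfolding good_def pbs_init_def by (auto simp: distinct_map inj_on_def)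
  have mv: "Mv (pbs_init n) = n - 1" by (simp add: Mv_def pbs_init_def)
  have pw: "Pw (pbs_init n) = w n" using assms by (simp add: Pw_def pbs_init_def)
  have v: "V (pbs_init n) = real n ^ (n - 2)"
    unfolding V_def mv pw w_def by simp
  from main_count[OF refl g] have "finite (plays (pbs_init n))" "real (card (plays (pbs_init n))) = real n ^ (n-2)"
    using v by auto
  then show ?thesis unfolding pbs_lines_def plays_def by (simp flip: of_nat_power)
qed

end
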